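(* Let $\Delta$ be a simplicial complex on $[n]$, let $1\le r\le n$, and let $\Sigma=\Delta^{[1]}\cup\Delta^{[2]}\cup\dots\cup\Delta^{[r]}$. Suppose $\Delta$ is fixed by permutations on $[r]$. If $\widetilde H_i(\Sigma)\neq0$, then $\widetilde H_{i-1}(\Delta)\neq0$.
   Context: A simplicial complex on $[n]=\{1,\dots,n\}$ is a collection of subsets of $[n]$ closed under taking subsets (not every singleton need belong to it). $\widetilde H_i$ denotes reduced simplicial homology with coefficients in a field $\Bbbk$. For a simplicial complex $\Delta$ and an element $v$ (not necessarily a vertex of $\Delta$), $\Delta^{[v]}=\Delta\cup\{F\cup\{v\}:F\in\Delta\}$. For $X\subset[n]$, $\Delta$ is fixed by permutations on $X$ if $\sigma(\Delta)=\{\sigma(F):F\in\Delta\}$ equals $\Delta$ for every permutation $\sigma$ of $[n]$ fixing each element outside $X$. *)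

theory Defs
  imports "HOL-Combinatorics.Permutations"
begin

definition simplicial_complex :: "nat \<Rightarrow> nat set set \<Rightarrow> bool" where
  "simplicial_complex n \<Delta> \<longleftrightarrow> \<Delta> \<subseteq> Pow {1..n} \<and> (\<forall>F\<in>\<Delta>. \<forall>G. G \<subseteq> F \<longrightarrow> G \<in> \<Delta>)"

definition cone :: "nat set set \<Rightarrow> nat \<Rightarrow> nat set set" where
  "cone \<Delta> v = \<Delta> \<union> {insert v F | F. F \<in> \<Delta>}"

definition fixed_by_perms_on :: "nat set set \<Rightarrow> nat set \<Rightarrow> bool" where
  "fixed_by_perms_on \<Delta> X \<longleftrightarrow> (\<forall>\<sigma>. \<sigma> permutes X \<longrightarrow> (\<lambda>F. \<sigma> ` F) ` \<Delta> = \<Delta>)"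

text \<open>Augmented (reduced) oriented simplicial chain complex with coefficients in a field 'k.
  An i-chain (i :: int, i >= -1) is a function on faces, supported on faces F of Delta with |F| = i+1;
  faces are oriented by the natural order of their vertices.\<close>
definition chains :: "nat set set \<Rightarrow> int \<Rightarrow> (nat set \<Rightarrow> 'k::field) set" where
  "chains \<Delta> i = {c. \<forall>F. c F \<noteq> 0 \<longrightarrow> F \<in> \<Delta> \<and> int (card F) = i + 1}"

text \<open>Boundary: (bd c)(G) = sum over v not in G of (-1)^#{u in G. u < v} * c(G + v).
  On 0-chains this is the augmentation map to the (-1)-chains (supported on the empty face).\<close>
definition bd :: "nat set set \<Rightarrow> (nat set \<Rightarrow> 'k::field) \<Rightarrow> nat set \<Rightarrow> 'k" where
  "bd \<Delta> c G = (\<Sum>v \<in> (\<Union>\<Delta>) - G. (-1) ^ card {u \<in> G. u < v} * c (insert v G))"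

definition reduced_homology_nonzero :: "'k::field itself \<Rightarrow> nat set set \<Rightarrow> int \<Rightarrow> bool" where
  "reduced_homology_nonzero TYPE('k) \<Delta> i \<longleftrightarrow>
     (\<exists>z \<in> (chains \<Delta> i :: (nat set \<Rightarrow> 'k) set). bd \<Delta> z = (\<lambda>_. 0) \<and>
        \<not> (\<exists>w \<in> (chains \<Delta> (i + 1) :: (nat set \<Rightarrow> 'k) set). bd \<Delta> w = z))"

end

theory Submission
  imports Defs
begin


definition sg :: "nat set \<Rightarrow> nat \<Rightarrow> 'k::field" where
  "sg G v = (-1) ^ card {u\<in>G. u < v}"

definition D :: "nat \<Rightarrow> (nat set \<Rightarrow> 'k::field) \<Rightarrow> nat set \<Rightarrow> 'k" where
  "D n c G = (\<Sum>v\<in>{1..n} - G. sg G v * c (insert v G))"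

definition K :: "nat \<Rightarrow> (nat set \<Rightarrow> 'k::field) \<Rightarrow> nat set \<Rightarrow> 'k" where
  "K m c G = (if m \<in> G then sg G m * c (G - {m}) else 0)"

lemma fin_below: "finite {u\<in>G. u < (v::nat)}"
  by (rule finite_subset[of _ "{..<v}"]) auto

lemma sg_insert: "v \<notin> G \<Longrightarrow> v \<noteq> m \<Longrightarrow>
   sg (insert v G) m = (if v < m then - sg G m else (sg G m :: 'k::field))"
proof -
  assume a: "v \<notin> G" "v \<noteq> m"
  show ?thesis
  proof (cases "v < m")
    case True
    have "{u\<in>insert v G. u < m} = insert v {u\<in>G. u < m}" using True by auto
    hence "card {u\<in>insert v G. u < m} = Suc (card {u\<in>G. u < m})"
      using a fin_below by simp
    thus ?thesis using True by (simp add: sg_def)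
  next
    case False
    have "{u\<in>insert v G. u < m} = {u\<in>G. u < m}" using False a by auto
    thus ?thesis using False by (simp add: sg_def)
  qed
qed

lemma sg_self_insert: "sg (insert m G) m = sg G m"
proof -
  have "{u\<in>insert m G. u < m} = {u\<in>G. u < m}" by auto
  thus ?thesis by (simp add: sg_def)
qed

lemma sg_self_remove: "sg (G - {m}) m = sg G m"
proof -
  have "{u\<in>G - {m}. u < m} = {u\<in>G. u < m}" by auto
  thus ?thesis by (simp add: sg_def)
qed

lemma sg_sq: "sg G v * sg G v = (1::'k::field)"
  by (simp add: sg_def power_mult_distrib[symmetric] power_add[symmetric] flip: power_mult_distrib)

lemma K_K: "K m (K m c) = (\<lambda>_. 0)"
  by (auto simp: K_def fun_eq_iff)

lemma D_K: fixes c :: "nat set \<Rightarrow> 'k::field" assumes m: "m \<in> {1..n}"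
  shows "D n (K m c) G = c G - K m (D n c) G"
proof (cases "m \<in> G")
  case False
  have "D n (K m c) G = sg G m * K m c (insert m G) + (\<Sum>v\<in>({1..n} - G) - {m}. sg G v * K m c (insert v G))"
    unfolding D_def using m False by (subst sum.remove[of _ m]) auto
  also have "(\<Sum>v\<in>({1..n} - G) - {m}. sg G v * K m c (insert v G)) = 0"
    using False by (intro sum.neutral) (auto simp: K_def)
  also have "sg G m * K m c (insert m G) = c G"
    using False by (simp add: K_def sg_self_insert mult.assoc[symmetric] sg_sq)
  moreover have "K m (D n c) G = 0" using False by (simp add: K_def)
  ultimately show ?thesis by simp
next
  case True
  have ins: "{1..n} - (G - {m}) = insert m ({1..n} - G)" using m True by auto
  have "K m (D n c) G = sg G m * (sg (G - {m}) m * c G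
      + (\<Sum>v\<in>{1..n} - G. sg (G - {m}) v * c (insert v (G - {m}))))"
    using True unfolding K_def D_def ins by (subst sum.insert) (auto simp: insert_absorb)
  also have "\<dots> = c G + (\<Sum>v\<in>{1..n} - G. sg G m * sg (G - {m}) v * c (insert v (G - {m})))"
    by (simp add: sg_self_remove distrib_left sum_distrib_left mult.assoc[symmetric] sg_sq)
  finally have e1: "K m (D n c) G = \<dots>" .
  have "D n (K m c) G = (\<Sum>v\<in>{1..n} - G. - (sg G m * sg (G - {m}) v * c (insert v (G - {m}))))"
    unfolding D_def
  proof (rule sum.cong[OF refl])
    fix v assume v: "v \<in> {1..n} - G"
    hence vm: "v \<noteq> m" "v \<notin> G" using True by auto
    have GG: "insert m (G - {m}) = G" using True by auto
    have s1: "sg G v = (if m < v then - sg (G - {m}) v else (sg (G - {m}) v :: 'k))"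
      using sg_insert[of m "G - {m}" v] vm unfolding GG by simp
    have s2: "sg (insert v G) m = (if v < m then - sg G m else (sg G m :: 'k))"
      using sg_insert[of v G m] vm by auto
    have e: "insert v G - {m} = insert v (G - {m})" using vm by auto
    have "K m c (insert v G) = sg (insert v G) m * c (insert v (G - {m}))"
      using True e by (simp add: K_def)
    thus "sg G v * K m c (insert v G) = - (sg G m * sg (G - {m}) v * c (insert v (G - {m})))"
      unfolding s1 s2 using vm by (cases "v < m") auto
  qed
  also have "\<dots> = - (\<Sum>v\<in>{1..n} - G. sg G m * sg (G - {m}) v * c (insert v (G - {m})))"
    by (simp add: sum_negf)
  finally show ?thesis using e1 by simp
qed

lemma D_D: "D n (D n c) G = (0::'k::field)"
proof -
  define S where "S = {1..n} - G"
  define f where "f v w = sg G v * sg (insert v G) w * c (insert w (insert v G))" for v w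
  have fin: "finite S" unfolding S_def by auto
  have anti: "f v w = - f w v" if "v \<in> S" "w \<in> S" "v \<noteq> w" for v w
  proof -
    have "v \<notin> G" "w \<notin> G" using that unfolding S_def by auto
    hence "sg (insert v G) w = (if v < w then - sg G w else (sg G w :: 'k))"
          "sg (insert w G) v = (if w < v then - sg G v else (sg G v :: 'k))"
      using sg_insert[of v G w] sg_insert[of w G v] that by auto
    thus ?thesis unfolding f_def using that by (auto simp: insert_commute)
  qed
  have "D n (D n c) G = (\<Sum>v\<in>S. \<Sum>w\<in>S - {v}. f v w)"
    unfolding D_def S_def f_def
    by (intro sum.cong refl) (auto simp: sum_distrib_left mult.assoc intro!: sum.cong)
  also have "\<dots> = (\<Sum>p\<in>(SIGMA v:S. S - {v}). f (fst p) (snd p))"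
    by (subst sum.Sigma) (use fin in \<open>auto simp: case_prod_beta\<close>)
  also have "(SIGMA v:S. S - {v}) = {p\<in>S\<times>S. fst p < snd p} \<union> {p\<in>S\<times>S. snd p < fst p}"
    by auto
  also have "(\<Sum>p\<in>\<dots>. f (fst p) (snd p)) = (\<Sum>p\<in>{p\<in>S\<times>S. fst p < snd p}. f (fst p) (snd p))
       + (\<Sum>p\<in>{p\<in>S\<times>S. snd p < fst p}. f (fst p) (snd p))"
    by (rule sum.union_disjoint) (use fin in auto)
  also have "{p\<in>S\<times>S. snd p < fst p} = prod.swap ` {p\<in>S\<times>S. fst p < snd p}"
    by force
  also have "(\<Sum>p\<in>prod.swap ` {p\<in>S\<times>S. fst p < snd p}. f (fst p) (snd p))
     = (\<Sum>p\<in>{p\<in>S\<times>S. fst p < snd p}. f (snd p) (fst p))"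
    by (subst sum.reindex) (auto simp: inj_on_def)
  also have "\<dots> = (\<Sum>p\<in>{p\<in>S\<times>S. fst p < snd p}. - f (fst p) (snd p))"
    by (intro sum.cong refl) (auto intro: anti)
  finally show ?thesis by (simp add: sum_negf)
qed



lemma D_add: "D n (\<lambda>G. a G + b G) G = D n a G + (D n b G :: 'k::field)"
  by (simp add: D_def distrib_left sum.distrib)
lemma D_diff: "D n (\<lambda>G. a G - b G) G = D n a G - (D n b G :: 'k::field)"
  by (simp add: D_def right_diff_distrib sum_subtractf)
lemma D_zero: "D n (\<lambda>G. 0) G = (0::'k::field)"
  by (simp add: D_def)

lemma sg_nz: "sg G v \<noteq> (0::'k::field)"
  using sg_sq[of G v] by (metis mult_zero_left zero_neq_one)

lemma bd_eq_D:
  assumes "\<Gamma> \<subseteq> Pow {1..n}" and "\<forall>F. c F \<noteq> 0 \<longrightarrow> F \<in> \<Gamma>"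
  shows "bd \<Gamma> c = D n (c :: nat set \<Rightarrow> 'k::field)"
proof
  fix G
  have "(\<Sum>v\<in>(\<Union>\<Gamma>) - G. (-1) ^ card {u \<in> G. u < v} * c (insert v G))
      = (\<Sum>v\<in>{1..n} - G. (-1) ^ card {u \<in> G. u < v} * c (insert v G))"
  proof (rule sum.mono_neutral_left)
    show "finite ({1..n} - G)" by auto
    show "\<Union>\<Gamma> - G \<subseteq> {1..n} - G" using assms(1) by auto
    show "\<forall>v\<in>{1..n} - G - (\<Union>\<Gamma> - G). (-1) ^ card {u \<in> G. u < v} * c (insert v G) = 0"
      using assms(2) by auto
  qed
  thus "bd \<Gamma> c G = D n c G" by (simp add: bd_def D_def sg_def)
qed

lemma sc_fin: "simplicial_complex n \<Gamma> \<Longrightarrow> G \<in> \<Gamma> \<Longrightarrow> finite G"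
  unfolding simplicial_complex_def by (auto intro: finite_subset)

lemma sc_down: "simplicial_complex n \<Gamma> \<Longrightarrow> F \<in> \<Gamma> \<Longrightarrow> G \<subseteq> F \<Longrightarrow> G \<in> \<Gamma>"
  unfolding simplicial_complex_def by blast

lemma D_supp:
  assumes sc: "simplicial_complex n \<Gamma>" and c: "c \<in> chains \<Gamma> k" and nz: "D n c G \<noteq> (0::'k::field)"
  shows "G \<in> \<Gamma> \<and> int (card G) = k"
proof -
  from nz obtain v where v: "v \<in> {1..n} - G" "sg G v * c (insert v G) \<noteq> 0"
    unfolding D_def using sum.not_neutral_contains_not_neutral by blast
  hence "c (insert v G) \<noteq> 0" by auto
  hence I: "insert v G \<in> \<Gamma>" "int (card (insert v G)) = k + 1" using c by (auto simp: chains_def)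
  have "G \<in> \<Gamma>" using sc_down[OF sc I(1)] by auto
  moreover have "finite G" using sc_fin[OF sc \<open>G \<in> \<Gamma>\<close>] .
  hence "card (insert v G) = Suc (card G)" using v(1) by simp
  ultimately show ?thesis using I(2) by simp
qed

lemma D_chains:
  assumes sc: "simplicial_complex n \<Gamma>" and c: "c \<in> chains \<Gamma> k"
  shows "D n c \<in> (chains \<Gamma> (k - 1) :: (nat set \<Rightarrow> 'k::field) set)"
  unfolding chains_def
proof (intro CollectI allI impI)
  fix G assume "D n c G \<noteq> 0"
  from D_supp[OF sc c this] show "G \<in> \<Gamma> \<and> int (card G) = k - 1 + 1" by simp
qed

lemma K_nz: "K m c G \<noteq> 0 \<Longrightarrow> m \<in> G \<and> c (G - {m}) \<noteq> 0"
  by (auto simp: K_def split: if_splits)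

lemma card_rm: "finite G \<Longrightarrow> m \<in> G \<Longrightarrow> int (card G) = int (card (G - {m})) + 1"
proof -
  assume "finite G" "m \<in> G"
  from card_Suc_Diff1[OF this] show ?thesis by simp
qed

lemma K_chains:
  assumes sc: "simplicial_complex n \<Gamma>" and c: "c \<in> chains \<Gamma> k"
    and ins: "\<And>F. F \<in> \<Gamma> \<Longrightarrow> m \<notin> F \<Longrightarrow> int (card F) = k + 1 \<Longrightarrow> insert m F \<in> \<Gamma>'"
  shows "K m c \<in> (chains \<Gamma>' (k + 1) :: (nat set \<Rightarrow> 'k::field) set)"
  unfolding chains_def
proof (intro CollectI allI impI)
  fix G assume nz: "K m c G \<noteq> 0"
  have G1: "m \<in> G" using K_nz[OF nz] by blast
  have G2: "c (G - {m}) \<noteq> 0" using K_nz[OF nz] by blast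
  have F1: "G - {m} \<in> \<Gamma>" using c G2 unfolding chains_def by blast
  have F2: "int (card (G - {m})) = k + 1" using c G2 unfolding chains_def by blast
  have fin: "finite (G - {m})" using sc_fin[OF sc F1] .
  have e: "insert m (G - {m}) = G" using G1 by blast
  have "insert m (G - {m}) \<in> \<Gamma>'" by (rule ins[OF F1 _ F2]) simp
  hence "G \<in> \<Gamma>'" unfolding e .
  moreover have "finite G" using fin by (metis e finite_insert)
  hence "int (card G) = int (card (G - {m})) + 1" by (rule card_rm) (rule G1)
  hence "int (card G) = k + 1 + 1" using F2 by linarith
  ultimately show "G \<in> \<Gamma>' \<and> int (card G) = k + 1 + 1" by (rule conjI)
qed

lemma chains_add: "a \<in> chains \<Gamma> k \<Longrightarrow> b \<in> chains \<Gamma> k \<Longrightarrow> (\<lambda>G. a G + b G) \<in> (chains \<Gamma> k :: (nat set \<Rightarrow> 'k::field) set)"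
proof -
  assume A: "a \<in> chains \<Gamma> k" "b \<in> chains \<Gamma> k"
  show ?thesis unfolding chains_def
  proof (intro CollectI allI impI)
    fix F assume "a F + b F \<noteq> 0" hence "a F \<noteq> 0 \<or> b F \<noteq> 0" by auto
    thus "F \<in> \<Gamma> \<and> int (card F) = k + 1" using A unfolding chains_def by blast
  qed
qed
lemma chains_diff: "a \<in> chains \<Gamma> k \<Longrightarrow> b \<in> chains \<Gamma> k \<Longrightarrow> (\<lambda>G. a G - b G) \<in> (chains \<Gamma> k :: (nat set \<Rightarrow> 'k::field) set)"
proof -
  assume A: "a \<in> chains \<Gamma> k" "b \<in> chains \<Gamma> k"
  show ?thesis unfolding chains_def
  proof (intro CollectI allI impI)
    fix F assume "a F - b F \<noteq> 0" hence "a F \<noteq> 0 \<or> b F \<noteq> 0" by auto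
    thus "F \<in> \<Gamma> \<and> int (card F) = k + 1" using A unfolding chains_def by blast
  qed
qed
lemma chains_mono: "a \<in> chains \<Gamma> k \<Longrightarrow> \<Gamma> \<subseteq> \<Gamma>' \<Longrightarrow> a \<in> chains \<Gamma>' k"
  unfolding chains_def by auto

definition acyc :: "'k::field itself \<Rightarrow> nat \<Rightarrow> nat set set \<Rightarrow> int \<Rightarrow> bool" where
  "acyc TYPE('k) n \<Gamma> k \<longleftrightarrow> (\<forall>y \<in> (chains \<Gamma> k :: (nat set \<Rightarrow> 'k) set). D n y = (\<lambda>_. 0) \<longrightarrow>
      (\<exists>w \<in> chains \<Gamma> (k + 1). D n w = y))"

definition R :: "nat \<Rightarrow> (nat set \<Rightarrow> 'k::field) \<Rightarrow> nat set \<Rightarrow> 'k" where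
  "R a w F = (if a \<notin> F then sg F a * w (insert a F) else 0)"

lemma decomp: "w G = K a (R a w) G + (if a \<in> G then 0 else w G)"
proof (cases "a \<in> G")
  case True
  hence "insert a (G - {a}) = G" by auto
  thus ?thesis using True
    by (simp add: K_def R_def sg_self_remove mult.assoc[symmetric] sg_sq)
qed (simp add: K_def)

lemma del_acyclic:
  assumes sc: "simplicial_complex n \<Gamma>" and a: "a \<in> {1..n}" and b: "b \<in> {1..n}" and ab: "a \<noteq> b"
    and sym: "\<And>F. a \<notin> F \<Longrightarrow> b \<notin> F \<Longrightarrow> insert a F \<in> \<Gamma> \<Longrightarrow> insert b F \<in> \<Gamma>"
    and ac: "acyc TYPE('k::field) n \<Gamma> k"
  shows "acyc TYPE('k) n {F\<in>\<Gamma>. a \<notin> F} k"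
  unfolding acyc_def
proof (intro ballI impI)
  fix y :: "nat set \<Rightarrow> 'k" assume y: "y \<in> chains {F\<in>\<Gamma>. a \<notin> F} k" and Dy: "D n y = (\<lambda>_. 0)"
  have y': "y \<in> chains \<Gamma> k" using chains_mono[OF y] by auto
  obtain w where w: "w \<in> chains \<Gamma> (k + 1)" and Dw: "D n w = y"
    using ac y' Dy unfolding acyc_def by blast
  define u where "u = R a w"
  define w0 where "w0 = (\<lambda>G. if a \<in> G then 0 else w G)"
  have wdec: "w = (\<lambda>G. K a u G + w0 G)" unfolding u_def w0_def using decomp[of w] by auto
  have yeq: "y G = u G - K a (D n u) G + D n w0 G" for G
  proof -
    have "y G = D n w G" using Dw by simp
    also have "\<dots> = D n (\<lambda>G. K a u G + w0 G) G" by (subst wdec) (rule refl)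
    also have "\<dots> = D n (K a u) G + D n w0 G" by (rule D_add)
    also have "\<dots> = u G - K a (D n u) G + D n w0 G" by (simp only: D_K[OF a])
    finally show ?thesis .
  qed
  have ya: "y G = 0" if "a \<in> G" for G using y that unfolding chains_def by auto
  have ua: "u G = 0" if "a \<in> G" for G using that unfolding u_def R_def by auto
  have w0a: "D n w0 G = 0" if "a \<in> G" for G
    unfolding D_def w0_def using that by (intro sum.neutral) auto
  have Du: "D n u F = 0" for F
  proof (cases "a \<in> F")
    case True thus ?thesis unfolding D_def using ua by (intro sum.neutral) auto
  next
    case False
    have "K a (D n u) (insert a F) = 0"
      using yeq[of "insert a F"] ya[of "insert a F"] ua[of "insert a F"] w0a[of "insert a F"] by simp
    hence "sg (insert a F) a * D n u F = 0" using False by (simp add: K_def)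
    thus ?thesis using sg_nz by auto
  qed
  have yeq2: "y G = u G + D n w0 G" for G using yeq[of G] Du by (simp add: K_def)
  define p where "p = R b u"
  define q where "q = (\<lambda>G. if b \<in> G then 0 else u G)"
  have udec: "u = (\<lambda>G. K b p G + q G)" unfolding p_def q_def using decomp[of u] by auto
  have eq0: "p G - K b (D n p) G + D n q G = 0" for G
  proof -
    have "0 = D n u G" using Du by simp
    also have "\<dots> = D n (\<lambda>G. K b p G + q G) G" by (subst udec) (rule refl)
    also have "\<dots> = D n (K b p) G + D n q G" by (rule D_add)
    also have "\<dots> = p G - K b (D n p) G + D n q G" by (simp only: D_K[OF b])
    finally show ?thesis by simp
  qed
  have peq: "p G = - D n q G" for G
  proof (cases "b \<in> G")
    case True
    have "p G = 0" using True unfolding p_def R_def by auto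
    moreover have "D n q G = 0" unfolding D_def q_def using True by (intro sum.neutral) auto
    ultimately show ?thesis by simp
  next
    case False thus ?thesis using eq0[of G] by (simp add: K_def eq_neg_iff_add_eq_0)
  qed
  have ueq: "u G = D n (K b q) G" for G
    using udec D_K[OF b, of q G] peq by (simp add: K_def)
  define x where "x = (\<lambda>G. K b q G + w0 G)"
  have "D n x = y" unfolding x_def
    using yeq2 ueq D_add[of n "K b q" w0] by auto
  moreover have "x \<in> chains {F\<in>\<Gamma>. a \<notin> F} (k + 1)"
    unfolding chains_def
  proof (intro CollectI allI impI)
    fix G assume "x G \<noteq> 0"
    hence "K b q G \<noteq> 0 \<or> w0 G \<noteq> 0" unfolding x_def by auto
    thus "G \<in> {F\<in>\<Gamma>. a \<notin> F} \<and> int (card G) = k + 1 + 1"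
    proof
      assume "w0 G \<noteq> 0"
      thus ?thesis using w unfolding w0_def chains_def by (auto split: if_splits)
    next
      assume "K b q G \<noteq> 0"
      hence G: "b \<in> G" "q (G - {b}) \<noteq> 0" using K_nz by metis+
      define F where "F = G - {b}"
      have "u F \<noteq> 0" "b \<notin> F" using G unfolding q_def F_def by (auto split: if_splits)
      hence aF: "a \<notin> F" "w (insert a F) \<noteq> 0" unfolding u_def R_def by (auto split: if_splits)
      hence I: "insert a F \<in> \<Gamma>" "int (card (insert a F)) = k + 1 + 1"
        using w unfolding chains_def by auto
      have fin: "finite F" using sc_fin[OF sc I(1)] by auto
      have "insert b F \<in> \<Gamma>" using sym[OF aF(1) \<open>b \<notin> F\<close> I(1)] .
      moreover have "insert b F = G" using G F_def by auto
      moreover have "card (insert b F) = card (insert a F)"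
        using fin aF(1) \<open>b \<notin> F\<close> by simp
      ultimately show ?thesis using I ab aF(1) by auto
    qed
  qed
  ultimately show "\<exists>w\<in>chains {F\<in>\<Gamma>. a \<notin> F} (k + 1). D n w = y" by blast
qed



lemma sym_swap:
  assumes fx: "fixed_by_perms_on \<Delta> {1..r}" and a: "a \<in> {1..r}" and b: "b \<in> {1..r}"
    and aF: "a \<notin> F" and bF: "b \<notin> F" and I: "insert a F \<in> \<Delta>"
  shows "insert b F \<in> \<Delta>"
proof -
  have p: "transpose a b permutes {1..r}" using permutes_swap_id[OF a b] .
  hence eq: "(\<lambda>F. transpose a b ` F) ` \<Delta> = \<Delta>" using fx unfolding fixed_by_perms_on_def by blast
  have "transpose a b ` insert a F = insert b F"
  proof -
    have "\<forall>x\<in>F. transpose a b x = x" using aF bF by (metis transpose_apply_other)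
    hence "transpose a b ` F = id ` F" by (intro image_cong) auto
    hence "transpose a b ` F = F" by simp
    thus ?thesis by simp
  qed
  moreover have "transpose a b ` insert a F \<in> (\<lambda>F. transpose a b ` F) ` \<Delta>" using I by blast
  ultimately show ?thesis using eq by simp
qed

lemma cone_down:
  assumes sc: "simplicial_complex n \<Delta>" and X: "X \<in> cone \<Delta> j" and G: "G \<subseteq> X"
  shows "G \<in> cone \<Delta> j"
proof -
  have X': "X \<in> \<Delta> \<or> (\<exists>F. F \<in> \<Delta> \<and> X = insert j F)" using X unfolding cone_def by blast
  show ?thesis
  proof (cases "X \<in> \<Delta>")
    case True
    have "G \<in> \<Delta>" by (rule sc_down[OF sc True G])
    thus ?thesis unfolding cone_def by (rule UnI1)
  next
    case False
    then obtain F where F: "F \<in> \<Delta>" "X = insert j F" using X' by blast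
    have sub: "G - {j} \<subseteq> F" using G F(2) by auto
    have GD: "G - {j} \<in> \<Delta>" by (rule sc_down[OF sc F(1) sub])
    show ?thesis
    proof (cases "j \<in> G")
      case True
      hence "G = insert j (G - {j})" by auto
      thus ?thesis using GD unfolding cone_def by auto
    next
      case False
      hence "G = G - {j}" by auto
      thus ?thesis using GD unfolding cone_def by auto
    qed
  qed
qed

definition Tc :: "nat set set \<Rightarrow> nat \<Rightarrow> nat set set" where
  "Tc \<Delta> m = \<Delta> \<union> (\<Union>j\<in>{1..m}. cone \<Delta> j)"

definition Av :: "nat set set \<Rightarrow> nat \<Rightarrow> nat set set" where
  "Av \<Delta> j = {F\<in>\<Delta>. F \<inter> {1..j} = {}}"

lemma sc_Av: "simplicial_complex n \<Delta> \<Longrightarrow> simplicial_complex n (Av \<Delta> j)"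
  unfolding simplicial_complex_def Av_def by blast

lemma sc_Tc: assumes sc: "simplicial_complex n \<Delta>" and m: "m \<le> n"
  shows "simplicial_complex n (Tc \<Delta> m)"
  unfolding simplicial_complex_def
proof (intro conjI ballI allI impI)
  show "Tc \<Delta> m \<subseteq> Pow {1..n}"
  proof
    fix X assume "X \<in> Tc \<Delta> m"
    hence "X \<in> \<Delta> \<or> (\<exists>j F. j \<in> {1..m} \<and> F \<in> \<Delta> \<and> X = insert j F)"
      unfolding Tc_def cone_def by blast
    moreover have "\<Delta> \<subseteq> Pow {1..n}" using sc unfolding simplicial_complex_def by blast
    ultimately show "X \<in> Pow {1..n}" using m by auto
  qed
next
  fix F G assume F: "F \<in> Tc \<Delta> m" and G: "G \<subseteq> F"
  from F show "G \<in> Tc \<Delta> m" unfolding Tc_def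
    using sc_down[OF sc _ G] cone_down[OF sc _ G] by blast
qed

lemma cone_Tc: "F \<in> \<Delta> \<Longrightarrow> j \<in> {1..m} \<Longrightarrow> insert j F \<in> Tc \<Delta> m"
  unfolding Tc_def cone_def by blast

lemma D_Tc: "\<Delta> \<subseteq> Tc \<Delta> m" unfolding Tc_def by blast

lemma Av_D: "Av \<Delta> j \<subseteq> \<Delta>" unfolding Av_def by blast

lemma T_avoid: assumes "G \<in> Tc \<Delta> m" "G \<inter> {1..m} = {}" shows "G \<in> \<Delta>"
proof -
  have "G \<in> \<Delta> \<or> (\<exists>j F. j \<in> {1..m} \<and> F \<in> \<Delta> \<and> G = insert j F)"
    using assms(1) unfolding Tc_def cone_def by blast
  thus ?thesis using assms(2) by blast
qed

lemma Tc_Suc: "Tc \<Delta> (Suc m) = Tc \<Delta> m \<union> cone \<Delta> (Suc m)"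
proof -
  have "{1..Suc m} = insert (Suc m) {1..m}" by auto
  thus ?thesis unfolding Tc_def by auto
qed

lemma T_step:
  assumes fx: "fixed_by_perms_on \<Delta> {1..r}" and sc: "simplicial_complex n \<Delta>"
    and r: "Suc m \<le> r" and G: "G \<in> Tc \<Delta> (Suc m)" and nG: "\<not> (Suc m \<in> G \<and> G \<inter> {1..m} = {})"
  shows "G \<in> Tc \<Delta> m"
proof (cases "G \<in> Tc \<Delta> m")
  case True thus ?thesis .
next
  case False
  hence "G \<in> cone \<Delta> (Suc m)" using G unfolding Tc_Suc by blast
  hence G': "G \<in> \<Delta> \<or> (\<exists>F. F \<in> \<Delta> \<and> G = insert (Suc m) F)" unfolding cone_def by blast
  show ?thesis
  proof (cases "G \<in> \<Delta>")
    case True thus ?thesis using D_Tc by blast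
  next
    case GnD: False
    then obtain F where F: "F \<in> \<Delta>" "G = insert (Suc m) F" using G' by blast
    have MF: "Suc m \<notin> F" using F GnD by (auto simp: insert_absorb)
    have "G \<inter> {1..m} \<noteq> {}" using nG F(2) by blast
    then obtain j where j: "j \<in> G" "j \<in> {1..m}" by blast
    have jM: "j \<noteq> Suc m" using j(2) by auto
    have jF: "j \<in> F" using j(1) jM F(2) by blast
    define F' where "F' = F - {j}"
    have F'1: "insert j F' = F" using jF F'_def by blast
    have jr: "j \<in> {1..r}" using j(2) r by auto
    have Mr: "Suc m \<in> {1..r}" using r by auto
    have jF': "j \<notin> F'" unfolding F'_def by blast
    have MF': "Suc m \<notin> F'" using MF unfolding F'_def by blast
    have "insert (Suc m) F' \<in> \<Delta>"
      by (rule sym_swap[OF fx jr Mr jF' MF']) (simp only: F'1 F(1))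
    hence "insert j (insert (Suc m) F') \<in> Tc \<Delta> m" using cone_Tc j(2) by blast
    moreover have "insert j (insert (Suc m) F') = G" using F'1 F(2) by blast
    ultimately show ?thesis by simp
  qed
qed

lemma TM_avoid:
  assumes sc: "simplicial_complex n \<Delta>" and I: "insert (Suc m) F \<in> Tc \<Delta> (Suc m)"
    and F: "F \<inter> {1..Suc m} = {}"
  shows "F \<in> \<Delta>"
proof -
  have MF: "Suc m \<notin> F" using F by auto
  have sub: "F \<subseteq> insert (Suc m) F" by blast
  show ?thesis
  proof (cases "insert (Suc m) F \<in> Tc \<Delta> m")
    case True
    moreover have "insert (Suc m) F \<inter> {1..m} = {}" using F by auto
    ultimately have "insert (Suc m) F \<in> \<Delta>" by (rule T_avoid)
    thus ?thesis using sc_down[OF sc _ sub] by blast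
  next
    case False
    hence "insert (Suc m) F \<in> cone \<Delta> (Suc m)" using I unfolding Tc_Suc by blast
    hence C: "insert (Suc m) F \<in> \<Delta> \<or> (\<exists>F'. F' \<in> \<Delta> \<and> insert (Suc m) F = insert (Suc m) F')"
      unfolding cone_def by blast
    show ?thesis
    proof (cases "insert (Suc m) F \<in> \<Delta>")
      case True thus ?thesis using sc_down[OF sc _ sub] by blast
    next
      case False
      then obtain F' where F': "F' \<in> \<Delta>" "insert (Suc m) F = insert (Suc m) F'" using C by blast
      have "F \<subseteq> insert (Suc m) F'" using F'(2) sub by simp
      hence "F \<subseteq> F'" using subset_insert[OF MF] by simp
      thus ?thesis using sc_down[OF sc F'(1)] by blast
    qed
  qed
qed



lemma Av0: "Av \<Delta> 0 = \<Delta>" unfolding Av_def by simp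

lemma Av_Suc: "Av \<Delta> (Suc j) = {F \<in> Av \<Delta> j. Suc j \<notin> F}"
proof -
  have "{1..Suc j} = insert (Suc j) {1..j}" by auto
  thus ?thesis unfolding Av_def by auto
qed

lemma acyc_Av:
  assumes sc: "simplicial_complex n \<Delta>" and fx: "fixed_by_perms_on \<Delta> {1..r}" and rn: "r \<le> n"
    and ac: "acyc TYPE('k::field) n \<Delta> k"
  shows "j < r \<Longrightarrow> acyc TYPE('k) n (Av \<Delta> j) k"
proof (induction j)
  case 0 thus ?case using ac by (simp add: Av0)
next
  case (Suc j)
  have IH: "acyc TYPE('k) n (Av \<Delta> j) k" using Suc by simp
  have a: "Suc j \<in> {1..n}" using Suc.prems rn by auto
  have b: "r \<in> {1..n}" using Suc.prems rn by auto
  have ab: "Suc j \<noteq> r" using Suc.prems by simp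
  have sym: "insert r F \<in> Av \<Delta> j"
    if F: "Suc j \<notin> F" "r \<notin> F" "insert (Suc j) F \<in> Av \<Delta> j" for F
  proof -
    have I: "insert (Suc j) F \<in> \<Delta>" "insert (Suc j) F \<inter> {1..j} = {}" using F(3) unfolding Av_def by auto
    have "insert r F \<in> \<Delta>"
      by (rule sym_swap[OF fx _ _ F(1) F(2) I(1)]) (use Suc.prems in auto)
    moreover have "insert r F \<inter> {1..j} = {}" using I(2) Suc.prems by auto
    ultimately show ?thesis unfolding Av_def by blast
  qed
  show ?case unfolding Av_Suc
    by (rule del_acyclic[OF sc_Av[OF sc] a b ab sym IH])
qed

lemma main_ind:
  assumes sc: "simplicial_complex n \<Delta>" and fx: "fixed_by_perms_on \<Delta> {1..r}"
    and r1: "1 \<le> r" and rn: "r \<le> n" and H: "acyc TYPE('k::field) n \<Delta> (i - 1)"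
  shows "m \<le> r \<Longrightarrow> \<forall>m'. max 1 m \<le> m' \<longrightarrow> m' \<le> r \<longrightarrow>
     (\<forall>z \<in> (chains (Tc \<Delta> m) i :: (nat set \<Rightarrow> 'k) set). D n z = (\<lambda>_. 0) \<longrightarrow>
        (\<exists>x \<in> chains (Tc \<Delta> m') (i + 1). D n x = z))"
proof (induction m)
  case 0
  show ?case
  proof (intro allI impI ballI)
    fix m' and z :: "nat set \<Rightarrow> 'k"
    assume m': "max 1 0 \<le> m'" "m' \<le> r" and z: "z \<in> chains (Tc \<Delta> 0) i" and Dz: "D n z = (\<lambda>_. 0)"
    have z': "z \<in> chains \<Delta> i" using z unfolding Tc_def by simp
    have one: "(1::nat) \<in> {1..n}" using r1 rn by auto
    have "K 1 z \<in> (chains (Tc \<Delta> m') (i + 1) :: (nat set \<Rightarrow> 'k) set)"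
    proof (rule K_chains[OF sc z'])
      fix F assume "F \<in> \<Delta>"
      moreover have "(1::nat) \<in> {1..m'}" using m' by auto
      ultimately show "insert 1 F \<in> Tc \<Delta> m'" by (rule cone_Tc)
    qed
    moreover have "D n (K 1 z) = z"
    proof
      fix G show "D n (K 1 z) G = z G" using D_K[OF one, of z G] Dz by (simp add: K_def)
    qed
    ultimately show "\<exists>x\<in>chains (Tc \<Delta> m') (i + 1). D n x = z" by blast
  qed
next
  case (Suc m)
  have mr: "m < r" using Suc.prems by simp
  note IH = Suc.IH[OF less_imp_le[OF mr]]
  show ?case
  proof (intro allI impI ballI)
    fix m' and z :: "nat set \<Rightarrow> 'k"
    assume m': "max 1 (Suc m) \<le> m'" "m' \<le> r" and z: "z \<in> chains (Tc \<Delta> (Suc m)) i"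
      and Dz: "D n z = (\<lambda>_. 0)"
    define M where "M = Suc m"
    have Mn: "M \<in> {1..n}" using Suc.prems rn unfolding M_def by auto
    have scm: "simplicial_complex n (Tc \<Delta> m)" using sc_Tc[OF sc] mr rn by simp
    have scM: "simplicial_complex n (Tc \<Delta> M)" using sc_Tc[OF sc] Suc.prems rn unfolding M_def by simp
    define c where "c = (\<lambda>F. if F \<inter> {1..M} = {} then sg F M * z (insert M F) else (0::'k))"
    define e where "e = (\<lambda>G. z G - K M c G)"
    have c_ch: "c \<in> chains (Av \<Delta> M) (i - 1)"
      unfolding chains_def
    proof (intro CollectI allI impI)
      fix F assume cF: "c F \<noteq> 0"
      hence F1: "F \<inter> {1..M} = {}" and zF: "z (insert M F) \<noteq> 0" unfolding c_def by (auto split: if_splits)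
      have I: "insert M F \<in> Tc \<Delta> M" "int (card (insert M F)) = i + 1"
        using z zF unfolding chains_def M_def by auto
      have FD: "F \<in> \<Delta>" using TM_avoid[OF sc] I(1) F1 unfolding M_def by blast
      have MF: "M \<notin> F" using F1 unfolding M_def by auto
      have "finite F" using sc_fin[OF sc FD] .
      hence "card (insert M F) = Suc (card F)" using MF by simp
      hence "int (card F) = i - 1 + 1" using I(2) by simp
      moreover have "F \<in> Av \<Delta> M" using FD F1 unfolding Av_def by blast
      ultimately show "F \<in> Av \<Delta> M \<and> int (card F) = i - 1 + 1" by blast
    qed
    have KcG: "K M c G = z G" if G: "M \<in> G" "G \<inter> {1..m} = {}" for G
    proof -
      have "(G - {M}) \<inter> {1..M} = {}" using G unfolding M_def by auto
      moreover have "insert M (G - {M}) = G" using G by auto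
      ultimately show ?thesis using G
        by (simp add: K_def c_def sg_self_remove mult.assoc[symmetric] sg_sq)
    qed
    have KcG0: "K M c G = 0" if G: "\<not> (M \<in> G \<and> G \<inter> {1..m} = {})" for G
    proof (cases "M \<in> G")
      case True
      hence "G \<inter> {1..m} \<noteq> {}" using G by blast
      hence "(G - {M}) \<inter> {1..M} \<noteq> {}" unfolding M_def by auto
      thus ?thesis using True by (simp add: K_def c_def)
    qed (simp add: K_def)
    have e_ch: "e \<in> chains (Tc \<Delta> m) i"
      unfolding chains_def
    proof (intro CollectI allI impI)
      fix G assume eG: "e G \<noteq> 0"
      have nG: "\<not> (M \<in> G \<and> G \<inter> {1..m} = {})"
      proof
        assume "M \<in> G \<and> G \<inter> {1..m} = {}"
        hence "e G = 0" unfolding e_def using KcG by simp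
        thus False using eG by simp
      qed
      hence "z G \<noteq> 0" using eG KcG0 unfolding e_def by simp
      hence "G \<in> Tc \<Delta> M" "int (card G) = i + 1" using z unfolding chains_def M_def by auto
      moreover have "G \<in> Tc \<Delta> m"
        using T_step[OF fx sc Suc.prems] \<open>G \<in> Tc \<Delta> M\<close> nG unfolding M_def by blast
      ultimately show "G \<in> Tc \<Delta> m \<and> int (card G) = i + 1" by blast
    qed
    define y where "y = D n (K M c)"
    have y_eq: "y G = c G - K M (D n c) G" for G unfolding y_def by (rule D_K[OF Mn])
    have zdec: "z = (\<lambda>G. K M c G + e G)" unfolding e_def by simp
    have y_e: "y G = - D n e G" for G
    proof -
      have "0 = D n z G" using Dz by simp
      also have "\<dots> = D n (\<lambda>G. K M c G + e G) G" by (subst zdec) (rule refl)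
      also have "\<dots> = y G + D n e G" unfolding y_def by (rule D_add)
      finally show ?thesis by (simp add: eq_neg_iff_add_eq_0)
    qed
    have Dy: "D n y = (\<lambda>_. 0)" unfolding y_def using D_D by blast
    have y_ch: "y \<in> chains (Av \<Delta> m) (i - 1)"
      unfolding chains_def
    proof (intro CollectI allI impI)
      fix G assume yG: "y G \<noteq> 0"
      hence "D n e G \<noteq> 0" using y_e by simp
      from D_supp[OF scm e_ch this] have G1: "G \<in> Tc \<Delta> m" "int (card G) = i" by auto
      have "c G \<noteq> 0 \<or> K M (D n c) G \<noteq> 0" using yG y_eq by auto
      hence "G \<inter> {1..m} = {}"
      proof
        assume "c G \<noteq> 0"
        hence "G \<inter> {1..M} = {}" unfolding c_def by (auto split: if_splits)
        thus ?thesis unfolding M_def by auto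
      next
        assume "K M (D n c) G \<noteq> 0"
        hence K1: "M \<in> G" "D n c (G - {M}) \<noteq> 0" using K_nz by metis+
        from D_supp[OF sc_Av[OF sc] c_ch K1(2)] have "G - {M} \<in> Av \<Delta> M" by blast
        hence "(G - {M}) \<inter> {1..M} = {}" unfolding Av_def by blast
        thus ?thesis unfolding M_def by auto
      qed
      hence "G \<in> \<Delta>" using T_avoid G1(1) by blast
      hence "G \<in> Av \<Delta> m" using \<open>G \<inter> {1..m} = {}\<close> unfolding Av_def by blast
      thus "G \<in> Av \<Delta> m \<and> int (card G) = i - 1 + 1" using G1(2) by simp
    qed
    obtain w where w: "w \<in> chains (Av \<Delta> m) (i - 1 + 1)" and Dw: "D n w = y"
      using acyc_Av[OF sc fx rn H mr] y_ch Dy unfolding acyc_def by blast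
    have w1: "w \<in> chains (Av \<Delta> m) i" using w by simp
    have w2: "w \<in> chains (Tc \<Delta> m) i"
      by (rule chains_mono[OF w1]) (rule subset_trans[OF Av_D D_Tc])
    have ew: "(\<lambda>G. e G + w G) \<in> chains (Tc \<Delta> m) i" by (rule chains_add[OF e_ch w2])
    have Dew: "D n (\<lambda>G. e G + w G) = (\<lambda>_. 0)"
    proof
      fix G show "D n (\<lambda>G. e G + w G) G = 0" using D_add[of n e w G] y_e[of G] Dw by simp
    qed
    have mm': "max 1 m \<le> m'" using m' by simp
    obtain x0 where x0: "x0 \<in> chains (Tc \<Delta> m') (i + 1)" and Dx0: "D n x0 = (\<lambda>G. e G + w G)"
      using IH mm' m'(2) ew Dew by blast
    have Kw: "K M w \<in> (chains (Tc \<Delta> m') (i + 1) :: (nat set \<Rightarrow> 'k) set)"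
    proof (rule K_chains[OF sc_Av[OF sc] w1])
      fix F assume "F \<in> Av \<Delta> m"
      hence "F \<in> \<Delta>" unfolding Av_def by blast
      moreover have "M \<in> {1..m'}" using m' unfolding M_def by auto
      ultimately show "insert M F \<in> Tc \<Delta> m'" by (rule cone_Tc)
    qed
    define x where "x = (\<lambda>G. x0 G - K M w G)"
    have "x \<in> chains (Tc \<Delta> m') (i + 1)" unfolding x_def by (rule chains_diff[OF x0 Kw])
    moreover have "D n x = z"
    proof
      fix G
      have KK: "K M y G = K M c G"
        using y_eq by (simp add: K_def)
      have "D n x G = D n x0 G - D n (K M w) G" unfolding x_def by (rule D_diff)
      also have "\<dots> = e G + w G - (w G - K M (D n w) G)" using Dx0 D_K[OF Mn, of w G] by simp
      also have "\<dots> = e G + K M c G" using Dw KK by simp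
      also have "\<dots> = z G" unfolding e_def by simp
      finally show "D n x G = z G" .
    qed
    ultimately show "\<exists>x\<in>chains (Tc \<Delta> m') (i + 1). D n x = z" by blast
  qed
qed


theorem lemma3p2:
  fixes \<Delta> :: "nat set set" and n r :: nat and i :: int
  assumes "simplicial_complex n \<Delta>"
    and "1 \<le> r" and "r \<le> n"
    and "fixed_by_perms_on \<Delta> {1..r}"
    and "reduced_homology_nonzero TYPE('k::field) (\<Union>j\<in>{1..r}. cone \<Delta> j) i"
  shows "reduced_homology_nonzero TYPE('k::field) \<Delta> (i - 1)"
proof (rule ccontr)
  assume nH: "\<not> reduced_homology_nonzero TYPE('k) \<Delta> (i - 1)"
  have DP: "\<Delta> \<subseteq> Pow {1..n}" using assms(1) unfolding simplicial_complex_def by blast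
  have H: "acyc TYPE('k) n \<Delta> (i - 1)"
    unfolding acyc_def
  proof (intro ballI impI)
    fix y :: "nat set \<Rightarrow> 'k" assume y: "y \<in> chains \<Delta> (i - 1)" and Dy: "D n y = (\<lambda>_. 0)"
    have supp: "\<forall>F. y F \<noteq> 0 \<longrightarrow> F \<in> \<Delta>" using y unfolding chains_def by blast
    have "bd \<Delta> y = (\<lambda>_. 0)" using bd_eq_D[OF DP supp] Dy by simp
    then obtain w where w: "w \<in> chains \<Delta> (i - 1 + 1)" "bd \<Delta> w = y"
      using nH y unfolding reduced_homology_nonzero_def by blast
    have sw: "\<forall>F. w F \<noteq> 0 \<longrightarrow> F \<in> \<Delta>" using w(1) unfolding chains_def by blast
    have "D n w = y" using bd_eq_D[OF DP sw] w(2) by simp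
    thus "\<exists>w\<in>chains \<Delta> (i - 1 + 1). D n w = y" using w(1) by blast
  qed
  define S where "S = (\<Union>j\<in>{1..r}. cone \<Delta> j)"
  have "\<Delta> \<subseteq> cone \<Delta> 1" unfolding cone_def by blast
  moreover have "(1::nat) \<in> {1..r}" using assms(2) by simp
  ultimately have "\<Delta> \<subseteq> S" unfolding S_def by blast
  hence SE: "S = Tc \<Delta> r" unfolding S_def Tc_def by blast
  have scS: "simplicial_complex n (Tc \<Delta> r)" by (rule sc_Tc[OF assms(1) assms(3)])
  have SP: "S \<subseteq> Pow {1..n}" using scS SE unfolding simplicial_complex_def by blast
  obtain z :: "nat set \<Rightarrow> 'k" where z: "z \<in> chains S i" "bd S z = (\<lambda>_. 0)"
      and nb: "\<not> (\<exists>w\<in>chains S (i + 1). bd S w = z)"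
    using assms(5) unfolding reduced_homology_nonzero_def S_def by blast
  have sz: "\<forall>F. z F \<noteq> 0 \<longrightarrow> F \<in> S" using z(1) unfolding chains_def by blast
  have Dz: "D n z = (\<lambda>_. 0)" using bd_eq_D[OF SP sz] z(2) by simp
  have z': "z \<in> chains (Tc \<Delta> r) i" using z(1) SE by simp
  have "\<forall>m'. max 1 r \<le> m' \<longrightarrow> m' \<le> r \<longrightarrow>
     (\<forall>z \<in> (chains (Tc \<Delta> r) i :: (nat set \<Rightarrow> 'k) set). D n z = (\<lambda>_. 0) \<longrightarrow>
        (\<exists>x \<in> chains (Tc \<Delta> m') (i + 1). D n x = z))"
    by (rule main_ind[OF assms(1) assms(4) assms(2) assms(3) H]) simp
  hence "\<forall>z \<in> (chains (Tc \<Delta> r) i :: (nat set \<Rightarrow> 'k) set). D n z = (\<lambda>_. 0) \<longrightarrow>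
        (\<exists>x \<in> chains (Tc \<Delta> r) (i + 1). D n x = z)" using assms(2) by simp
  then obtain x where x: "x \<in> chains (Tc \<Delta> r) (i + 1)" "D n x = z" using z' Dz by blast
  have x': "x \<in> chains S (i + 1)" using x(1) SE by simp
  have sx: "\<forall>F. x F \<noteq> 0 \<longrightarrow> F \<in> S" using x' unfolding chains_def by blast
  have "bd S x = z" using bd_eq_D[OF SP sx] x(2) by simp
  thus False using nb x' by blast
qed

end
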